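(* Let $1\le p,q<\infty$ and $\theta>0$, and let $g:\mathbb R\to\mathbb R$ be a measurable function with compact support. Then the multiplication operator $M_g f=fg$ is bounded from $l^{q),\theta}(L^p)$ to $l^{q),\theta}(L^p)$ if and only if $g\in L^\infty(\mathbb R)$. Moreover, in that case $\|M_g\|=\|g\|_{L^\infty}$.
   Context: Index set $\mathbb Z$, $I_k=[k,k+1)$. The space $l^{q),\theta}(L^p)$ consists of complex-valued measurable $f$ on $\mathbb R$ with $f\chi_{I_k}\in L^p$ for all $k\in\mathbb Z$ and $$\|f\|_{p,q),\theta}:=\sup_{\varepsilon>0}\Big(\varepsilon^{\theta}\sum_{k\in\mathbb Z}\Big(\int_k^{k+1}|f(x)|^p\,dx\Big)^{\frac{q(1+\varepsilon)}{p}}\Big)^{\frac{1}{q(1+\varepsilon)}}<\infty.$$ $\|M_g\|$ denotes the operator norm on this space. *)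

theory Defs
  imports "HOL-Analysis.Analysis" "HOL-Probability.Essential_Supremum"
begin

text \<open>Real power on extended nonnegative reals (used only with positive exponents).\<close>
definition enn_powr :: "ennreal \<Rightarrow> real \<Rightarrow> ennreal" where
  "enn_powr x a = (if x = \<infinity> then \<infinity> else ennreal (enn2real x powr a))"

definition loc_int :: "real \<Rightarrow> (real \<Rightarrow> complex) \<Rightarrow> int \<Rightarrow> ennreal" where
  "loc_int p f k = (\<integral>\<^sup>+ x \<in> {real_of_int k..<real_of_int k + 1}. ennreal (cmod (f x) powr p) \<partial>lebesgue)"

definition grand_norm :: "real \<Rightarrow> real \<Rightarrow> real \<Rightarrow> (real \<Rightarrow> complex) \<Rightarrow> ennreal" where
  "grand_norm p q \<theta> f =
     (SUP \<epsilon>\<in>{0<..}. enn_powr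
        (ennreal (\<epsilon> powr \<theta>) *
           (\<integral>\<^sup>+ k. enn_powr (loc_int p f k) (q * (1 + \<epsilon>) / p) \<partial>count_space (UNIV :: int set)))
        (1 / (q * (1 + \<epsilon>))))"

definition grand_space :: "real \<Rightarrow> real \<Rightarrow> real \<Rightarrow> (real \<Rightarrow> complex) set" where
  "grand_space p q \<theta> = {f. f \<in> borel_measurable lebesgue \<and> (\<forall>k. loc_int p f k < \<infinity>)
                          \<and> grand_norm p q \<theta> f < \<infinity>}"

definition mult_op :: "(real \<Rightarrow> real) \<Rightarrow> (real \<Rightarrow> complex) \<Rightarrow> (real \<Rightarrow> complex)" where
  "mult_op g f = (\<lambda>x. f x * complex_of_real (g x))"

definition mult_bounded :: "real \<Rightarrow> real \<Rightarrow> real \<Rightarrow> (real \<Rightarrow> real) \<Rightarrow> bool" where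
  "mult_bounded p q \<theta> g \<longleftrightarrow>
     (\<forall>f \<in> grand_space p q \<theta>. mult_op g f \<in> grand_space p q \<theta>) \<and>
     (\<exists>C::real. \<forall>f \<in> grand_space p q \<theta>.
        grand_norm p q \<theta> (mult_op g f) \<le> ennreal C * grand_norm p q \<theta> f)"

definition mult_opnorm :: "real \<Rightarrow> real \<Rightarrow> real \<Rightarrow> (real \<Rightarrow> real) \<Rightarrow> ennreal" where
  "mult_opnorm p q \<theta> g =
     Inf {C::ennreal. \<forall>f \<in> grand_space p q \<theta>.
            grand_norm p q \<theta> (mult_op g f) \<le> C * grand_norm p q \<theta> f}"

definition Linf_norm :: "(real \<Rightarrow> real) \<Rightarrow> ennreal" where
  "Linf_norm g = esssup lebesgue (\<lambda>x. ennreal \<bar>g x\<bar>)"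

end

theory Submission
  imports Defs
begin

lemma enn_powr_mono:
  assumes "x \<le> y" "0 \<le> a" shows "enn_powr x a \<le> enn_powr y a"
proof (cases "y = \<infinity>")
  case True then show ?thesis by (simp add: enn_powr_def)
next
  case False
  then have "x \<noteq> \<infinity>" using assms(1) by (metis infinity_ennreal_def top.extremum_uniqueI)
  moreover have "enn2real x \<le> enn2real y" using assms(1) False by (simp add: enn2real_mono less_top)
  ultimately show ?thesis using False assms
    by (auto simp: enn_powr_def intro!: ennreal_leI powr_mono2)
qed

lemma enn_powr_cmult:
  assumes "0 \<le> c" "0 < a"
  shows "enn_powr (ennreal c * x) a = ennreal (c powr a) * enn_powr x a"
proof (cases "x = \<infinity>")
  case True
  show ?thesis
  proof (cases "c = 0")
    case True with \<open>x = \<infinity>\<close> show ?thesis by (simp add: enn_powr_def)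
  next
    case False
    then have "c > 0" using assms by simp
    then show ?thesis using True by (simp add: enn_powr_def ennreal_mult_eq_top_iff)
  qed
next
  case False
  then have "ennreal c * x \<noteq> \<infinity>" by (simp add: ennreal_mult_eq_top_iff)
  then show ?thesis using False assms
    by (simp add: enn_powr_def enn2real_mult powr_mult ennreal_mult)
qed

lemma enn_powr_zero[simp]: "0 < a \<Longrightarrow> enn_powr 0 a = 0"
  by (simp add: enn_powr_def)


lemma term_le:
  assumes c: "0 \<le> c" and p: "0 < p" and q: "0 < q" and e: "0 < \<epsilon>"
    and h: "\<And>j. loc_int p h j \<le> ennreal (c powr p) * loc_int p f j"
  shows "enn_powr (ennreal (\<epsilon> powr \<theta>) *
           (\<integral>\<^sup>+ k. enn_powr (loc_int p h k) (q * (1 + \<epsilon>) / p) \<partial>count_space (UNIV :: int set)))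
        (1 / (q * (1 + \<epsilon>)))
   \<le> ennreal c * enn_powr (ennreal (\<epsilon> powr \<theta>) *
           (\<integral>\<^sup>+ k. enn_powr (loc_int p f k) (q * (1 + \<epsilon>) / p) \<partial>count_space (UNIV :: int set)))
        (1 / (q * (1 + \<epsilon>)))"
proof -
  define a where "a = q * (1 + \<epsilon>) / p"
  define b where "b = 1 / (q * (1 + \<epsilon>))"
  have a: "0 < a" using p q e by (simp add: a_def)
  have b: "0 < b" using q e by (simp add: b_def)
  have cp: "0 \<le> c powr p" using c by simp
  have cpa: "0 \<le> (c powr p) powr a" by simp
  have "(\<integral>\<^sup>+ k. enn_powr (loc_int p h k) a \<partial>count_space UNIV)
      \<le> (\<integral>\<^sup>+ k. ennreal ((c powr p) powr a) * enn_powr (loc_int p f k) a \<partial>count_space UNIV)"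
    by (intro nn_integral_mono) (metis enn_powr_mono enn_powr_cmult[OF cp a] h less_imp_le[OF a])
  also have "\<dots> = ennreal ((c powr p) powr a) * (\<integral>\<^sup>+ k. enn_powr (loc_int p f k) a \<partial>count_space UNIV)"
    by (simp add: nn_integral_cmult)
  finally have S: "(\<integral>\<^sup>+ k. enn_powr (loc_int p h k) a \<partial>count_space UNIV)
      \<le> ennreal ((c powr p) powr a) * (\<integral>\<^sup>+ k. enn_powr (loc_int p f k) a \<partial>count_space UNIV)" .
  have "ennreal (\<epsilon> powr \<theta>) * (\<integral>\<^sup>+ k. enn_powr (loc_int p h k) a \<partial>count_space UNIV)
     \<le> ennreal ((c powr p) powr a) * (ennreal (\<epsilon> powr \<theta>) * (\<integral>\<^sup>+ k. enn_powr (loc_int p f k) a \<partial>count_space UNIV))"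
    using mult_left_mono[OF S, of "ennreal (\<epsilon> powr \<theta>)"] by (simp add: ac_simps)
  then have "enn_powr (ennreal (\<epsilon> powr \<theta>) * (\<integral>\<^sup>+ k. enn_powr (loc_int p h k) a \<partial>count_space UNIV)) b
     \<le> ennreal (((c powr p) powr a) powr b) * enn_powr (ennreal (\<epsilon> powr \<theta>) * (\<integral>\<^sup>+ k. enn_powr (loc_int p f k) a \<partial>count_space UNIV)) b"
    using enn_powr_mono[OF _ less_imp_le[OF b]] enn_powr_cmult[OF cpa b] by metis
  moreover have "((c powr p) powr a) powr b = c"
    using c p q e by (simp add: powr_powr a_def b_def)
  ultimately show ?thesis by (simp add: a_def b_def)
qed

lemma term_ge:
  assumes c: "0 \<le> c" and p: "0 < p" and q: "0 < q" and e: "0 < \<epsilon>"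
    and h: "\<And>j. ennreal (c powr p) * loc_int p f j \<le> loc_int p h j"
  shows "ennreal c * enn_powr (ennreal (\<epsilon> powr \<theta>) *
           (\<integral>\<^sup>+ k. enn_powr (loc_int p f k) (q * (1 + \<epsilon>) / p) \<partial>count_space (UNIV :: int set)))
        (1 / (q * (1 + \<epsilon>)))
   \<le> enn_powr (ennreal (\<epsilon> powr \<theta>) *
           (\<integral>\<^sup>+ k. enn_powr (loc_int p h k) (q * (1 + \<epsilon>) / p) \<partial>count_space (UNIV :: int set)))
        (1 / (q * (1 + \<epsilon>)))"
proof -
  define a where "a = q * (1 + \<epsilon>) / p"
  define b where "b = 1 / (q * (1 + \<epsilon>))"
  have a: "0 < a" using p q e by (simp add: a_def)
  have b: "0 < b" using q e by (simp add: b_def)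
  have cp: "0 \<le> c powr p" using c by simp
  have cpa: "0 \<le> (c powr p) powr a" by simp
  have "ennreal ((c powr p) powr a) * (\<integral>\<^sup>+ k. enn_powr (loc_int p f k) a \<partial>count_space UNIV)
     = (\<integral>\<^sup>+ k. ennreal ((c powr p) powr a) * enn_powr (loc_int p f k) a \<partial>count_space UNIV)"
    by (simp add: nn_integral_cmult)
  also have "\<dots> \<le> (\<integral>\<^sup>+ k. enn_powr (loc_int p h k) a \<partial>count_space UNIV)"
    by (intro nn_integral_mono) (metis enn_powr_mono enn_powr_cmult[OF cp a] h less_imp_le[OF a])
  finally have S: "ennreal ((c powr p) powr a) * (\<integral>\<^sup>+ k. enn_powr (loc_int p f k) a \<partial>count_space UNIV)
      \<le> (\<integral>\<^sup>+ k. enn_powr (loc_int p h k) a \<partial>count_space UNIV)" .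
  have "ennreal ((c powr p) powr a) * (ennreal (\<epsilon> powr \<theta>) * (\<integral>\<^sup>+ k. enn_powr (loc_int p f k) a \<partial>count_space UNIV))
     \<le> ennreal (\<epsilon> powr \<theta>) * (\<integral>\<^sup>+ k. enn_powr (loc_int p h k) a \<partial>count_space UNIV)"
    using mult_left_mono[OF S, of "ennreal (\<epsilon> powr \<theta>)"] by (simp add: ac_simps)
  then have "ennreal (((c powr p) powr a) powr b) * enn_powr (ennreal (\<epsilon> powr \<theta>) * (\<integral>\<^sup>+ k. enn_powr (loc_int p f k) a \<partial>count_space UNIV)) b
     \<le> enn_powr (ennreal (\<epsilon> powr \<theta>) * (\<integral>\<^sup>+ k. enn_powr (loc_int p h k) a \<partial>count_space UNIV)) b"
    using enn_powr_mono[OF _ less_imp_le[OF b]] enn_powr_cmult[OF cpa b] by metis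
  moreover have "((c powr p) powr a) powr b = c"
    using c p q e by (simp add: powr_powr a_def b_def)
  ultimately show ?thesis by (simp add: a_def b_def)
qed

lemma norm_le:
  assumes c: "0 \<le> c" and p: "0 < p" and q: "0 < q"
    and h: "\<And>j. loc_int p h j \<le> ennreal (c powr p) * loc_int p f j"
  shows "grand_norm p q \<theta> h \<le> ennreal c * grand_norm p q \<theta> f"
  unfolding grand_norm_def
  apply (rule SUP_least)
  apply (rule order_trans[OF term_le[OF c p q _ h]])
   apply simp
  apply (rule mult_left_mono)
   apply (rule SUP_upper)
  by auto

lemma norm_ge:
  assumes c: "0 \<le> c" and p: "0 < p" and q: "0 < q"
    and h: "\<And>j. ennreal (c powr p) * loc_int p f j \<le> loc_int p h j"
  shows "ennreal c * grand_norm p q \<theta> f \<le> grand_norm p q \<theta> h"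
  unfolding grand_norm_def SUP_mult_left_ennreal
proof (rule SUP_mono)
  fix e :: real assume "e \<in> {0<..}"
  then show "\<exists>m\<in>{0<..}. ennreal c * enn_powr (ennreal (e powr \<theta>) *
           (\<integral>\<^sup>+ k. enn_powr (loc_int p f k) (q * (1 + e) / p) \<partial>count_space (UNIV :: int set)))
        (1 / (q * (1 + e))) \<le> enn_powr (ennreal (m powr \<theta>) *
           (\<integral>\<^sup>+ k. enn_powr (loc_int p h k) (q * (1 + m) / p) \<partial>count_space (UNIV :: int set)))
        (1 / (q * (1 + m)))"
    using term_ge[OF c p q _ h, of e \<theta>] by auto
qed


lemma loc_le:
  assumes f: "f \<in> borel_measurable lebesgue" and g: "g \<in> borel_measurable lebesgue"
    and M: "0 \<le> M" and p: "0 < p" and ae: "AE x in lebesgue. \<bar>g x\<bar> \<le> M"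
  shows "loc_int p (mult_op g f) j \<le> ennreal (M powr p) * loc_int p f j"
proof -
  have "loc_int p (mult_op g f) j \<le> (\<integral>\<^sup>+ x. ennreal (M powr p) * (ennreal (cmod (f x) powr p) * indicator {real_of_int j..<real_of_int j + 1} x) \<partial>lebesgue)"
    unfolding loc_int_def
  proof (intro nn_integral_mono_AE, use ae in \<open>elim AE_mp\<close>, intro AE_I2 impI)
    fix x assume gx: "\<bar>g x\<bar> \<le> M"
    have "cmod (mult_op g f x) powr p = cmod (f x) powr p * \<bar>g x\<bar> powr p"
      by (simp add: mult_op_def norm_mult powr_mult)
    also have "\<dots> \<le> cmod (f x) powr p * M powr p"
      by (intro mult_left_mono powr_mono2) (use gx p in auto)
    finally have "ennreal (cmod (mult_op g f x) powr p) \<le> ennreal (M powr p) * ennreal (cmod (f x) powr p)"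
      by (simp add: ennreal_mult[symmetric] mult.commute ennreal_leI)
    then show "ennreal (cmod (mult_op g f x) powr p) * indicator {real_of_int j..<real_of_int j + 1} x
      \<le> ennreal (M powr p) * (ennreal (cmod (f x) powr p) * indicator {real_of_int j..<real_of_int j + 1} x)"
      by (simp add: indicator_def)
  qed
  also have "\<dots> = ennreal (M powr p) * loc_int p f j"
  proof -
    have [measurable]: "{real_of_int j..<real_of_int j + 1} \<in> sets lebesgue" by simp
    have [measurable]: "f \<in> borel_measurable lebesgue" by (rule f)
    show ?thesis unfolding loc_int_def by (intro nn_integral_cmult) measurable
  qed
  finally show ?thesis .
qed

lemma ind_loc:
  assumes E: "E \<in> sets lebesgue" and p: "0 < p"
  shows "loc_int p (\<lambda>x. complex_of_real (indicator E x)) j = emeasure lebesgue (E \<inter> {real_of_int j..<real_of_int j + 1})"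
proof -
  have "loc_int p (\<lambda>x. complex_of_real (indicator E x)) j = (\<integral>\<^sup>+ x. indicator (E \<inter> {real_of_int j..<real_of_int j + 1}) x \<partial>lebesgue)"
    unfolding loc_int_def using p by (intro nn_integral_cong) (auto simp: indicator_def)
  also have "\<dots> = emeasure lebesgue (E \<inter> {real_of_int j..<real_of_int j + 1})"
    using E by (intro nn_integral_indicator) auto
  finally show ?thesis .
qed


lemma ind_norm:
  assumes E: "E \<in> sets lebesgue" and Ek: "E \<subseteq> {real_of_int k..<real_of_int k + 1}"
    and pos: "0 < emeasure lebesgue E" and p: "0 < p" and q: "0 < q" and th: "0 < \<theta>"
  shows "(\<lambda>x. complex_of_real (indicator E x)) \<in> grand_space p q \<theta>"
    and "0 < grand_norm p q \<theta> (\<lambda>x. complex_of_real (indicator E x))"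
proof -
  define f where "f = (\<lambda>x. complex_of_real (indicator E x))"
  define m where "m = emeasure lebesgue E"
  have m1: "m \<le> 1"
  proof -
    have "m \<le> emeasure lebesgue {real_of_int k..<real_of_int k + 1}"
      unfolding m_def by (intro emeasure_mono Ek) simp
    also have "\<dots> = 1" by simp
    finally show ?thesis .
  qed
  have mpos: "0 < m" using pos m_def by simp
  have mfin: "m \<noteq> \<infinity>" using m1 by (metis ennreal_one_neq_top infinity_ennreal_def neq_top_trans)
  have loc: "loc_int p f j = (if j = k then m else 0)" for j
  proof -
    have "loc_int p f j = emeasure lebesgue (E \<inter> {real_of_int j..<real_of_int j + 1})"
      unfolding f_def by (rule ind_loc[OF E p])
    moreover have "E \<inter> {real_of_int j..<real_of_int j + 1} = (if j = k then E else {})"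
    proof (cases "j = k")
      case True then show ?thesis using Ek by auto
    next
      case False
      have "x \<notin> {real_of_int j..<real_of_int j + 1}" if "x \<in> E" for x
      proof
        assume "x \<in> {real_of_int j..<real_of_int j + 1}"
        then have "floor x = j" by (simp add: floor_eq_iff)
        moreover have "floor x = k" using Ek that by (auto simp add: floor_eq_iff)
        ultimately show False using False by simp
      qed
      then show ?thesis using False by auto
    qed
    ultimately show ?thesis by (simp add: m_def)
  qed
  have sum: "(\<integral>\<^sup>+ j. enn_powr (loc_int p f j) a \<partial>count_space (UNIV::int set)) = enn_powr m a" if a: "0 < a" for a
  proof -
    have "(\<integral>\<^sup>+ j. enn_powr (loc_int p f j) a \<partial>count_space (UNIV::int set))
       = (\<integral>\<^sup>+ j. enn_powr m a * indicator {k} j \<partial>count_space (UNIV::int set))"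
      by (intro nn_integral_cong) (simp add: loc a indicator_def)
    also have "\<dots> = enn_powr m a" by (simp add: nn_integral_cmult_indicator)
    finally show ?thesis .
  qed
  have Epow_le1: "enn_powr m a \<le> 1" if "0 < a" for a
    using enn_powr_mono[OF m1, of a] that by (simp add: enn_powr_def)
  have term_bd: "enn_powr (ennreal (\<epsilon> powr \<theta>) * (\<integral>\<^sup>+ j. enn_powr (loc_int p f j) (q * (1 + \<epsilon>) / p) \<partial>count_space (UNIV::int set)))
        (1 / (q * (1 + \<epsilon>))) \<le> ennreal (exp (\<theta> / q))" if e: "0 < \<epsilon>" for \<epsilon>
  proof -
    define a where "a = q * (1 + \<epsilon>) / p"
    define b where "b = 1 / (q * (1 + \<epsilon>))"
    have a: "0 < a" using p q e by (simp add: a_def)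
    have b: "0 < b" using q e by (simp add: b_def)
    have "enn_powr (ennreal (\<epsilon> powr \<theta>) * enn_powr m a) b = ennreal ((\<epsilon> powr \<theta>) powr b) * enn_powr (enn_powr m a) b"
      by (rule enn_powr_cmult) (use b in auto)
    also have "\<dots> \<le> ennreal ((\<epsilon> powr \<theta>) powr b) * 1"
      using enn_powr_mono[OF Epow_le1[OF a], of b] b by (intro mult_left_mono) (auto simp: enn_powr_def)
    also have "(\<epsilon> powr \<theta>) powr b \<le> exp (\<theta> / q)"
    proof -
      have "(\<epsilon> powr \<theta>) powr b = \<epsilon> powr (\<theta> * b)" by (simp add: powr_powr)
      also have "\<dots> \<le> exp (1 + \<epsilon>) powr (\<theta> * b)"
      proof (intro powr_mono2)
        show "\<epsilon> \<le> exp (1 + \<epsilon>)" using exp_ge_add_one_self[of "1 + \<epsilon>"] by simp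
      qed (use b th e in auto)
      also have "\<dots> = exp ((1 + \<epsilon>) * (\<theta> * b))" by (simp add: powr_def)
      also have "(1 + \<epsilon>) * (\<theta> * b) = \<theta> / q" using q e by (simp add: b_def)
      finally show ?thesis .
    qed
    then have "ennreal ((\<epsilon> powr \<theta>) powr b) * 1 \<le> ennreal (exp (\<theta> / q))" by (simp add: ennreal_leI)
    finally show ?thesis using sum[OF a] by (simp add: a_def b_def)
  qed
  have "grand_norm p q \<theta> f \<le> ennreal (exp (\<theta> / q))"
    unfolding grand_norm_def by (rule SUP_least) (use term_bd in auto)
  then have nfin: "grand_norm p q \<theta> f < \<infinity>" using ennreal_less_top[of "exp (\<theta> / q)"] by (metis infinity_ennreal_def order.strict_trans1)
  have locfin: "loc_int p f j < \<infinity>" for j using loc mfin by (simp add: less_top)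
  have meas: "f \<in> borel_measurable lebesgue" unfolding f_def using E by measurable
  show "(\<lambda>x. complex_of_real (indicator E x)) \<in> grand_space p q \<theta>"
    using nfin locfin meas unfolding grand_space_def f_def by auto
  have t1: "0 < enn_powr (ennreal (1 powr \<theta>) * (\<integral>\<^sup>+ j. enn_powr (loc_int p f j) (q * (1 + 1) / p) \<partial>count_space (UNIV::int set)))
        (1 / (q * (1 + 1)))"
  proof -
    have a: "0 < q * (1 + 1) / p" using p q by simp
    have "0 < enn2real m" using mpos mfin by (simp add: enn2real_positive_iff less_top)
    then show ?thesis using sum[OF a] mfin by (simp add: enn_powr_def)
  qed
  also have "\<dots> \<le> grand_norm p q \<theta> f"
    unfolding grand_norm_def by (rule SUP_upper) auto
  finally show "0 < grand_norm p q \<theta> (\<lambda>x. complex_of_real (indicator E x))" by (simp add: f_def)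
qed


lemma witness:
  assumes p: "0 < p" and q: "0 < q" and th: "0 < \<theta>" and g: "g \<in> borel_measurable lebesgue"
    and N: "0 \<le> N" and lt: "ennreal N < Linf_norm g"
  shows "\<exists>f\<in>grand_space p q \<theta>. 0 < grand_norm p q \<theta> f \<and> grand_norm p q \<theta> f < \<infinity> \<and>
           ennreal N * grand_norm p q \<theta> f \<le> grand_norm p q \<theta> (mult_op g f)"
proof -
  have [measurable]: "g \<in> borel_measurable lebesgue" by (rule g)
  define E0 where "E0 = {x. N < \<bar>g x\<bar>}"
  have "{x \<in> space lebesgue. N < \<bar>g x\<bar>} \<in> sets lebesgue" by measurable
  then have E0m: "E0 \<in> sets lebesgue" unfolding E0_def by simp
  have "0 < emeasure lebesgue {x \<in> space lebesgue. ennreal N < ennreal \<bar>g x\<bar>}"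
    using lt unfolding Linf_norm_def by (intro esssup_pos_measure) measurable
  then have E0pos: "0 < emeasure lebesgue E0"
    unfolding E0_def using N by (simp add: ennreal_less_iff)
  have "\<exists>k. 0 < emeasure lebesgue (E0 \<inter> {real_of_int k..<real_of_int k + 1})"
  proof (rule ccontr)
    assume "\<not> ?thesis"
    then have "\<And>k. E0 \<inter> {real_of_int k..<real_of_int k + 1} \<in> null_sets lebesgue"
      using E0m by (auto simp: null_sets_def)
    then have "(\<Union>k\<in>(UNIV::int set). E0 \<inter> {real_of_int k..<real_of_int k + 1}) \<in> null_sets lebesgue"
      by (intro null_sets_UN') auto
    moreover have "(\<Union>k\<in>(UNIV::int set). E0 \<inter> {real_of_int k..<real_of_int k + 1}) = E0"
    proof (safe)
      fix x assume "x \<in> E0"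
      then show "x \<in> (\<Union>k. E0 \<inter> {real_of_int k..<real_of_int k + 1})"
        by (intro UN_I[of "floor x"]) simp_all
    qed
    ultimately show False using E0pos by auto
  qed
  then obtain k where kpos: "0 < emeasure lebesgue (E0 \<inter> {real_of_int k..<real_of_int k + 1})" by blast
  define E where "E = E0 \<inter> {real_of_int k..<real_of_int k + 1}"
  have Em: "E \<in> sets lebesgue" unfolding E_def using E0m by (intro sets.Int) auto
  define f where "f = (\<lambda>x. complex_of_real (indicator E x))"
  have fin: "f \<in> grand_space p q \<theta>" and fpos: "0 < grand_norm p q \<theta> f"
    using ind_norm[OF Em _ _ p q th, of k] kpos unfolding f_def E_def by auto
  have ffin: "grand_norm p q \<theta> f < \<infinity>" using fin unfolding grand_space_def by auto
  have "ennreal (N powr p) * loc_int p f j \<le> loc_int p (mult_op g f) j" for j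
  proof -
    have [measurable]: "{real_of_int j..<real_of_int j + 1} \<in> sets lebesgue" by simp
    have [measurable]: "E \<in> sets lebesgue" by (rule Em)
    have "ennreal (N powr p) * loc_int p f j = (\<integral>\<^sup>+ x. ennreal (N powr p) * (ennreal (cmod (f x) powr p) * indicator {real_of_int j..<real_of_int j + 1} x) \<partial>lebesgue)"
      unfolding loc_int_def f_def by (intro nn_integral_cmult[symmetric]) measurable
    also have "\<dots> \<le> loc_int p (mult_op g f) j"
      unfolding loc_int_def
    proof (intro nn_integral_mono)
      fix x
      have "N powr p * cmod (f x) powr p \<le> cmod (mult_op g f x) powr p"
      proof (cases "x \<in> E")
        case True
        then have "N < \<bar>g x\<bar>" unfolding E_def E0_def by auto
        then show ?thesis using True N p by (simp add: f_def mult_op_def powr_mono2)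
      next
        case False then show ?thesis by (simp add: f_def mult_op_def)
      qed
      then show "ennreal (N powr p) * (ennreal (cmod (f x) powr p) * indicator {real_of_int j..<real_of_int j + 1} x)
         \<le> ennreal (cmod (mult_op g f x) powr p) * indicator {real_of_int j..<real_of_int j + 1} x"
        by (simp add: indicator_def ennreal_mult[symmetric] ennreal_leI)
    qed
    finally show ?thesis .
  qed
  then have "ennreal N * grand_norm p q \<theta> f \<le> grand_norm p q \<theta> (mult_op g f)"
    by (intro norm_ge[OF N p q])
  then show ?thesis using fin fpos ffin by blast
qed


lemma cancel_le:
  assumes "a * c \<le> b * (c::ennreal)" "0 < c" "c < \<infinity>" shows "a \<le> b"
  using assms ennreal_mult_le_mult_iff[of c a b] by (simp add: mult.commute)

lemma fwd:
  assumes p: "0 < p" and q: "0 < q" and g: "g \<in> borel_measurable lebesgue"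
    and M: "0 \<le> M" and L: "Linf_norm g = ennreal M" and f: "f \<in> grand_space p q \<theta>"
  shows "mult_op g f \<in> grand_space p q \<theta> \<and> grand_norm p q \<theta> (mult_op g f) \<le> ennreal M * grand_norm p q \<theta> f"
proof -
  have [measurable]: "g \<in> borel_measurable lebesgue" by (rule g)
  have fm[measurable]: "f \<in> borel_measurable lebesgue" using f by (simp add: grand_space_def)
  have "AE x in lebesgue. ennreal \<bar>g x\<bar> \<le> ennreal M"
    using esssup_AE[of "\<lambda>x. ennreal \<bar>g x\<bar>" lebesgue] L by (simp add: Linf_norm_def)
  then have ae: "AE x in lebesgue. \<bar>g x\<bar> \<le> M" using M by simp
  have loc: "loc_int p (mult_op g f) j \<le> ennreal (M powr p) * loc_int p f j" for j
    by (rule loc_le[OF fm g M p ae])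
  have nb: "grand_norm p q \<theta> (mult_op g f) \<le> ennreal M * grand_norm p q \<theta> f"
    by (rule norm_le[OF M p q loc])
  have "mult_op g f \<in> borel_measurable lebesgue" unfolding mult_op_def by measurable
  moreover have "loc_int p (mult_op g f) j < \<infinity>" for j
    using loc[of j] f by (simp add: grand_space_def ennreal_mult_less_top order.strict_trans1)
  moreover have "grand_norm p q \<theta> (mult_op g f) < \<infinity>"
    using nb f by (simp add: grand_space_def ennreal_mult_less_top order.strict_trans1)
  ultimately show ?thesis using nb by (simp add: grand_space_def)
qed

theorem theorem4p1:
  fixes p q \<theta> :: real and g :: "real \<Rightarrow> real"
  assumes "1 \<le> p" and "1 \<le> q" and "0 < \<theta>"
    and "g \<in> borel_measurable lebesgue"
    and "compact (closure {x. g x \<noteq> 0})"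
  shows "(mult_bounded p q \<theta> g \<longleftrightarrow> Linf_norm g < \<infinity>) \<and>
         (mult_bounded p q \<theta> g \<longrightarrow> mult_opnorm p q \<theta> g = Linf_norm g)"
proof -
  have p: "0 < p" and q: "0 < q" and th: "0 < \<theta>" and g: "g \<in> borel_measurable lebesgue"
    using assms by auto
  have A: "mult_bounded p q \<theta> g" if "Linf_norm g < \<infinity>"
  proof -
    define M where "M = enn2real (Linf_norm g)"
    have L: "Linf_norm g = ennreal M" using that unfolding M_def by (simp add: less_top)
    have M: "0 \<le> M" unfolding M_def by simp
    show ?thesis unfolding mult_bounded_def using fwd[OF p q g M L] by blast
  qed
  have low: "x \<le> C" if x: "x < Linf_norm g"
    and C: "\<forall>f\<in>grand_space p q \<theta>. grand_norm p q \<theta> (mult_op g f) \<le> C * grand_norm p q \<theta> f" for x C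
  proof -
    have "x < \<infinity>" using x by (metis infinity_ennreal_def less_le_trans top_greatest)
    then obtain N where N: "0 \<le> N" "x = ennreal N" by (metis ennreal_cases infinity_ennreal_def less_irrefl)
    obtain f where f: "f \<in> grand_space p q \<theta>" "0 < grand_norm p q \<theta> f" "grand_norm p q \<theta> f < \<infinity>"
      "ennreal N * grand_norm p q \<theta> f \<le> grand_norm p q \<theta> (mult_op g f)"
      using witness[OF p q th g N(1)] x N(2) by blast
    have "ennreal N * grand_norm p q \<theta> f \<le> C * grand_norm p q \<theta> f" using f C by (meson order.trans)
    then show ?thesis using cancel_le f N by blast
  qed
  have B: "Linf_norm g < \<infinity>" if mb: "mult_bounded p q \<theta> g"
  proof (rule ccontr)
    assume "\<not> ?thesis"
    then have inf: "Linf_norm g = \<infinity>" by (simp add: less_top[symmetric])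
    obtain C :: real where C: "\<forall>f\<in>grand_space p q \<theta>. grand_norm p q \<theta> (mult_op g f) \<le> ennreal C * grand_norm p q \<theta> f"
      using mb unfolding mult_bounded_def by blast
    have "ennreal (max C 0 + 1) \<le> ennreal C" using low[OF _ C, of "ennreal (max C 0 + 1)"] inf
      by (simp del: ennreal_plus add: ennreal_less_top)
    then have "max C 0 + 1 \<le> C" by (subst (asm) ennreal_le_iff2) auto
    then show False by simp
  qed
  have C: "mult_opnorm p q \<theta> g = Linf_norm g" if "mult_bounded p q \<theta> g"
  proof (rule antisym)
    have fin: "Linf_norm g < \<infinity>" using B that .
    define M where "M = enn2real (Linf_norm g)"
    have L: "Linf_norm g = ennreal M" using fin unfolding M_def by (simp add: less_top)
    have M: "0 \<le> M" unfolding M_def by simp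
    show "mult_opnorm p q \<theta> g \<le> Linf_norm g"
      unfolding mult_opnorm_def L using fwd[OF p q g M L] by (intro Inf_lower) blast
    show "Linf_norm g \<le> mult_opnorm p q \<theta> g"
      unfolding mult_opnorm_def
    proof (rule Inf_greatest)
      fix C assume "C \<in> {C. \<forall>f\<in>grand_space p q \<theta>. grand_norm p q \<theta> (mult_op g f) \<le> C * grand_norm p q \<theta> f}"
      then have C: "\<forall>f\<in>grand_space p q \<theta>. grand_norm p q \<theta> (mult_op g f) \<le> C * grand_norm p q \<theta> f" by simp
      show "Linf_norm g \<le> C" by (rule dense_le) (use low[OF _ C] in blast)
    qed
  qed
  show ?thesis using A B C by blast
qed

end
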